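(* There exists a $4\times 4$ Jacobi matrix $J$ that realizes perfect state transfer and has Early State Exclusion; i.e., if $T_0>0$ is the earliest time at which $J$ realizes perfect state transfer, then there is $t\in(0,T_0)$ with $(e^{-iJt}\mathbf{e}_0,\mathbf{e}_0)_{\mathbb{C}^{4}}=0$.
   Context: A Jacobi matrix of order $N+1$ is a real symmetric tridiagonal $(N+1)\times(N+1)$ matrix $J$ with diagonal entries $a_0,\dots,a_N\in\mathbb{R}$ and off-diagonal entries $b_0,\dots,b_{N-1}>0$. Let $\mathbf{e}_0,\dots,\mathbf{e}_N$ be the standard basis of $\mathbb{C}^{N+1}$. $J$ realizes perfect state transfer (PST) at time $T>0$ if $e^{-iTJ}\mathbf{e}_0=e^{i\phi}\mathbf{e}_N$ for some $\phi\in\mathbb{R}$. If $T_0$ is the earliest (smallest positive) such time, $J$ is said to have Early State Exclusion (ESE) at time $t$ if $0<t<T_0$ and $(e^{-iJt}\mathbf{e}_0,\mathbf{e}_0)_{\mathbb{C}^{N+1}}=0$. *)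

theory Defs
  imports "Jordan_Normal_Form.Matrix" Complex_Main
begin

definition jacobi_mat :: "nat \<Rightarrow> (nat \<Rightarrow> real) \<Rightarrow> (nat \<Rightarrow> real) \<Rightarrow> complex mat" where
  "jacobi_mat N a b = mat (Suc N) (Suc N) (\<lambda>(i, j).
      if i = j then complex_of_real (a i)
      else if j = i + 1 then complex_of_real (b i)
      else if i = j + 1 then complex_of_real (b j)
      else 0)"

definition mat_exp :: "complex mat \<Rightarrow> complex mat" where
  "mat_exp A = mat (dim_row A) (dim_col A)
      (\<lambda>(i, j). \<Sum>k. (A ^\<^sub>m k) $$ (i, j) / of_nat (fact k))"

definition pst :: "nat \<Rightarrow> complex mat \<Rightarrow> real \<Rightarrow> bool" where
  "pst N J T \<longleftrightarrow> T > 0 \<and>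
     (\<exists>\<phi>::real. mat_exp ((- \<i> * complex_of_real T) \<cdot>\<^sub>m J) *\<^sub>v unit_vec (Suc N) 0
                = exp (\<i> * complex_of_real \<phi>) \<cdot>\<^sub>v unit_vec (Suc N) N)"

definition earliest_pst :: "nat \<Rightarrow> complex mat \<Rightarrow> real \<Rightarrow> bool" where
  "earliest_pst N J T0 \<longleftrightarrow> pst N J T0 \<and> (\<forall>T. 0 < T \<and> T < T0 \<longrightarrow> \<not> pst N J T)"

definition ese :: "nat \<Rightarrow> complex mat \<Rightarrow> real \<Rightarrow> bool" where
  "ese N J t \<longleftrightarrow> (\<exists>T0. earliest_pst N J T0 \<and> 0 < t \<and> t < T0 \<and>
     (mat_exp ((- \<i> * complex_of_real t) \<cdot>\<^sub>m J) *\<^sub>v unit_vec (Suc N) 0) \<bullet>c unit_vec (Suc N) 0 = 0)"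

end

theory Submission
  imports Defs
begin

definition "sA = (\<lambda>_::nat. 0::real)"
definition "sB = (\<lambda>i::nat. if i = 1 then 1 else sqrt 15 / 2 :: real)"
definition "lam (m::nat) = ([5/2, 3/2, -3/2, -5/2] ! m :: real)"
definition "cf (m::nat) = ([3/16, 5/16, 5/16, 3/16] ! m :: real)"
definition "vv (m::nat) (i::nat) = ([[1, sqrt 15/3, sqrt 15/3, 1], [1, sqrt 15/5, - sqrt 15/5, -1],
   [1, - sqrt 15/5, - sqrt 15/5, 1], [1, -sqrt 15/3, sqrt 15/3, -1]] ! m ! i :: real)"
definition "Jr i j = (if i = j then sA i else if j = i + 1 then sB i else if i = j + 1 then sB j else 0)"

lemma s15: "sqrt 15 * sqrt 15 = (15::real)" by simp

lemma less4: "(i::nat) < 4 \<longleftrightarrow> i = 0 \<or> i = 1 \<or> i = 2 \<or> i = 3" by auto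

lemma eig: assumes "m < 4" "j < 4" shows "(\<Sum>l<4. vv m l * Jr l j) = lam m * vv m j"
  using assms unfolding less4
  by (auto simp: numeral_eq_Suc vv_def Jr_def lam_def sA_def sB_def field_simps s15)

lemma orth: assumes "i < 4" "j < 4" shows "(\<Sum>m<4. cf m * vv m i * vv m j) = (if i = j then 1 else 0)"
  using assms unfolding less4
  by (auto simp: numeral_eq_Suc vv_def cf_def field_simps s15)


definition "JJ = jacobi_mat 3 sA sB"
definition "AA (t::real) = (- \<i> * complex_of_real t) \<cdot>\<^sub>m JJ"

lemma JJ_dim[simp]: "dim_row JJ = 4" "dim_col JJ = 4"
  by (auto simp: JJ_def jacobi_mat_def)
lemma AA_dim[simp]: "dim_row (AA t) = 4" "dim_col (AA t) = 4"
  by (auto simp: AA_def)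
lemma JJ_idx: "i < 4 \<Longrightarrow> j < 4 \<Longrightarrow> JJ $$ (i,j) = complex_of_real (Jr i j)"
  by (auto simp: JJ_def jacobi_mat_def Jr_def)
lemma AA_idx: "i < 4 \<Longrightarrow> j < 4 \<Longrightarrow> AA t $$ (i,j) = - \<i> * complex_of_real t * complex_of_real (Jr i j)"
  by (auto simp: AA_def JJ_idx)

lemma eigc: assumes "m < 4" "j < 4"
  shows "(\<Sum>l<4. complex_of_real (vv m l) * (- \<i> * complex_of_real t * complex_of_real (Jr l j)))
     = (- \<i> * complex_of_real t * complex_of_real (lam m)) * complex_of_real (vv m j)"
proof -
  have "(\<Sum>l<4. complex_of_real (vv m l) * (- \<i> * complex_of_real t * complex_of_real (Jr l j)))
     = (- \<i> * complex_of_real t) * complex_of_real (\<Sum>l<4. vv m l * Jr l j)"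
    by (simp add: sum_distrib_left algebra_simps)
  also have "\<dots> = (- \<i> * complex_of_real t * complex_of_real (lam m)) * complex_of_real (vv m j)"
    using eig[OF assms] by simp
  finally show ?thesis .
qed

lemma AA_pow: "i < 4 \<Longrightarrow> j < 4 \<Longrightarrow> (AA t ^\<^sub>m k) $$ (i,j) =
   (\<Sum>m<4. complex_of_real (cf m * vv m i * vv m j) * (- \<i> * complex_of_real t * complex_of_real (lam m)) ^ k)"
proof (induction k arbitrary: i j)
  case 0
  have "(\<Sum>m<4. complex_of_real (cf m * vv m i * vv m j) * (- \<i> * complex_of_real t * complex_of_real (lam m)) ^ 0)
     = complex_of_real (\<Sum>m<4. cf m * vv m i * vv m j)" by (simp only: power_0 mult_1_right of_real_sum)
  then show ?case using orth[of i j] 0 by simp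
next
  case (Suc k)
  let ?mu = "\<lambda>m. - \<i> * complex_of_real t * complex_of_real (lam m)"
  have "(AA t ^\<^sub>m Suc k) $$ (i,j) = (\<Sum>l<4. (AA t ^\<^sub>m k) $$ (i,l) * AA t $$ (l,j))"
    using Suc.prems by (simp add: scalar_prod_def lessThan_atLeast0)
  also have "\<dots> = (\<Sum>l<4. (\<Sum>m<4. complex_of_real (cf m * vv m i * vv m l) * ?mu m ^ k) * (- \<i> * complex_of_real t * complex_of_real (Jr l j)))"
    using Suc by (intro sum.cong refl) (simp add: AA_idx)
  also have "\<dots> = (\<Sum>m<4. complex_of_real (cf m * vv m i) * ?mu m ^ k * (\<Sum>l<4. complex_of_real (vv m l) * (- \<i> * complex_of_real t * complex_of_real (Jr l j))))"
  proof -
    have e: "\<And>l m. complex_of_real (cf m * vv m i * vv m l) * ?mu m ^ k * (- \<i> * complex_of_real t * complex_of_real (Jr l j))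
       = complex_of_real (cf m * vv m i) * ?mu m ^ k * (complex_of_real (vv m l) * (- \<i> * complex_of_real t * complex_of_real (Jr l j)))"
      by (simp add: mult.assoc mult.left_commute)
    have "(\<Sum>l<4. (\<Sum>m<4. complex_of_real (cf m * vv m i * vv m l) * ?mu m ^ k) * (- \<i> * complex_of_real t * complex_of_real (Jr l j)))
      = (\<Sum>l<4. \<Sum>m<4. complex_of_real (cf m * vv m i) * ?mu m ^ k * (complex_of_real (vv m l) * (- \<i> * complex_of_real t * complex_of_real (Jr l j))))"
      by (simp only: sum_distrib_right e)
    also have "\<dots> = (\<Sum>m<4. \<Sum>l<4. complex_of_real (cf m * vv m i) * ?mu m ^ k * (complex_of_real (vv m l) * (- \<i> * complex_of_real t * complex_of_real (Jr l j))))"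
      by (rule sum.swap)
    finally show ?thesis by (simp only: sum_distrib_left)
  qed
  also have "\<dots> = (\<Sum>m<4. complex_of_real (cf m * vv m i * vv m j) * ?mu m ^ Suc k)"
  proof (intro sum.cong refl)
    fix m assume "m \<in> {..<4::nat}"
    then have "m < 4" by simp
    then show "complex_of_real (cf m * vv m i) * ?mu m ^ k * (\<Sum>l<4. complex_of_real (vv m l) * (- \<i> * complex_of_real t * complex_of_real (Jr l j)))
      = complex_of_real (cf m * vv m i * vv m j) * ?mu m ^ Suc k"
      by (subst eigc[OF \<open>m < 4\<close> Suc.prems(2)]) (simp only: power_Suc of_real_mult ac_simps)
  qed
  finally show ?case .
qed


lemma exp_sums_c: "(\<lambda>n. (z::complex)^n / of_nat (fact n)) sums exp z"
proof -
  have "(\<lambda>n. z^n /\<^sub>R fact n) = (\<lambda>n. z^n / of_nat (fact n))"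
    by (rule ext) (simp add: scaleR_conv_of_real divide_inverse mult.commute)
  then show ?thesis using exp_converges[of z] by simp
qed

definition "EE m t = exp (- \<i> * complex_of_real t * complex_of_real (lam m))"

lemma mat_exp_AA: "i < 4 \<Longrightarrow> j < 4 \<Longrightarrow> mat_exp (AA t) $$ (i,j) =
   (\<Sum>m<4. complex_of_real (cf m * vv m i * vv m j) * EE m t)"
proof -
  assume ij: "i < 4" "j < 4"
  have "(\<lambda>k. (AA t ^\<^sub>m k) $$ (i,j) / of_nat (fact k)) =
     (\<lambda>k. \<Sum>m<4. complex_of_real (cf m * vv m i * vv m j) * ((- \<i> * complex_of_real t * complex_of_real (lam m)) ^ k / of_nat (fact k)))"
    by (rule ext) (simp add: AA_pow[OF ij] sum_divide_distrib)
  moreover have "\<dots> sums (\<Sum>m<4. complex_of_real (cf m * vv m i * vv m j) * EE m t)"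
    unfolding EE_def by (intro sums_sum sums_mult exp_sums_c)
  ultimately have "(\<lambda>k. (AA t ^\<^sub>m k) $$ (i,j) / of_nat (fact k)) sums (\<Sum>m<4. complex_of_real (cf m * vv m i * vv m j) * EE m t)"
    by simp
  then show ?thesis using ij by (simp add: mat_exp_def sums_iff)
qed

lemma vec_AA: "mat_exp (AA t) *\<^sub>v unit_vec 4 0 = vec 4 (\<lambda>i. \<Sum>m<4. complex_of_real (cf m * vv m i * vv m 0) * EE m t)"
proof (rule eq_vecI)
  fix i assume "i < dim_vec (vec 4 (\<lambda>i. \<Sum>m<4. complex_of_real (cf m * vv m i * vv m 0) * EE m t))"
  then have i: "i < 4" by simp
  have "(mat_exp (AA t) *\<^sub>v unit_vec 4 0) $ i = (\<Sum>l\<in>{0..<4}. mat_exp (AA t) $$ (i,l) * unit_vec 4 0 $ l)"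
    using i by (simp add: mat_exp_def scalar_prod_def)
  also have "\<dots> = mat_exp (AA t) $$ (i,0)"
    by (simp add: unit_vec_def atLeast0LessThan numeral_eq_Suc)
  finally show "(mat_exp (AA t) *\<^sub>v unit_vec 4 0) $ i = vec 4 (\<lambda>i. \<Sum>m<4. complex_of_real (cf m * vv m i * vv m 0) * EE m t) $ i"
    using i by (simp add: mat_exp_AA)
qed (simp add: mat_exp_def)

lemma EE_cs: "EE m t = complex_of_real (cos (t * lam m)) - \<i> * complex_of_real (sin (t * lam m))"
proof -
  have "EE m t = cis (- (t * lam m))" unfolding EE_def cis_conv_exp by (simp add: algebra_simps)
  then show ?thesis by (simp add: complex_eq_iff)
qed

lemma comp0: "(\<Sum>m<4. complex_of_real (cf m * vv m 0 * vv m 0) * EE m t) = complex_of_real (3/8 * cos (5/2*t) + 5/8 * cos (3/2*t))"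
  by (simp add: EE_cs numeral_eq_Suc cf_def vv_def lam_def complex_eq_iff mult.commute)


lemma comp1: "(\<Sum>m<4. complex_of_real (cf m * vv m 1 * vv m 0) * EE m t) = - \<i> * complex_of_real (sqrt 15/8 * (sin (5/2*t) + sin (3/2*t)))"
  by (simp add: EE_cs numeral_eq_Suc cf_def vv_def lam_def complex_eq_iff mult.commute ring_distribs)
lemma comp2: "(\<Sum>m<4. complex_of_real (cf m * vv m 2 * vv m 0) * EE m t) = complex_of_real (sqrt 15/8 * (cos (5/2*t) - cos (3/2*t)))"
  by (simp add: EE_cs numeral_eq_Suc cf_def vv_def lam_def complex_eq_iff mult.commute ring_distribs)
lemma comp3: "(\<Sum>m<4. complex_of_real (cf m * vv m 3 * vv m 0) * EE m t) = - \<i> * complex_of_real (3/8 * sin (5/2*t) - 5/8 * sin (3/2*t))"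
  by (simp add: EE_cs numeral_eq_Suc cf_def vv_def lam_def complex_eq_iff mult.commute)

lemma vec_AA': "mat_exp (AA t) *\<^sub>v unit_vec 4 0 = vec 4 (\<lambda>i.
   if i = 0 then complex_of_real (3/8 * cos (5/2*t) + 5/8 * cos (3/2*t))
   else if i = 1 then - \<i> * complex_of_real (sqrt 15/8 * (sin (5/2*t) + sin (3/2*t)))
   else if i = 2 then complex_of_real (sqrt 15/8 * (cos (5/2*t) - cos (3/2*t)))
   else - \<i> * complex_of_real (3/8 * sin (5/2*t) - 5/8 * sin (3/2*t)))"
  unfolding vec_AA
proof (rule eq_vecI)
  fix i assume "i < dim_vec (vec 4 (\<lambda>i.
   if i = 0 then complex_of_real (3/8 * cos (5/2*t) + 5/8 * cos (3/2*t))
   else if i = 1 then - \<i> * complex_of_real (sqrt 15/8 * (sin (5/2*t) + sin (3/2*t)))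
   else if i = 2 then complex_of_real (sqrt 15/8 * (cos (5/2*t) - cos (3/2*t)))
   else - \<i> * complex_of_real (3/8 * sin (5/2*t) - 5/8 * sin (3/2*t))))"
  then have "i = 0 \<or> i = 1 \<or> i = 2 \<or> i = 3" by auto
  then show "vec 4 (\<lambda>i. \<Sum>m<4. complex_of_real (cf m * vv m i * vv m 0) * EE m t) $ i = vec 4 (\<lambda>i.
   if i = 0 then complex_of_real (3/8 * cos (5/2*t) + 5/8 * cos (3/2*t))
   else if i = 1 then - \<i> * complex_of_real (sqrt 15/8 * (sin (5/2*t) + sin (3/2*t)))
   else if i = 2 then complex_of_real (sqrt 15/8 * (cos (5/2*t) - cos (3/2*t)))
   else - \<i> * complex_of_real (3/8 * sin (5/2*t) - 5/8 * sin (3/2*t))) $ i"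
  proof (elim disjE)
    assume "i = 0" then show ?thesis by (simp only: index_vec zero_less_numeral comp0) simp
  next
    assume ik: "i = 1" show ?thesis unfolding ik by (subst index_vec, simp, subst index_vec, simp, subst comp1, simp)
  next
    assume ik: "i = 2" show ?thesis unfolding ik by (subst index_vec, simp, subst index_vec, simp, subst comp2, simp)
  next
    assume ik: "i = 3" show ?thesis unfolding ik by (subst index_vec, simp, subst index_vec, simp, subst comp3, simp)
  qed
qed simp

lemma trig52: "cos (5*pi/2) = 0" "sin (5*pi/2) = 1"
proof -
  have e: "5*pi/2 = pi/2 + 2*pi" by simp
  show "cos (5*pi/2) = 0" "sin (5*pi/2) = 1" unfolding e by (simp_all only: cos_periodic sin_periodic cos_pi_half sin_pi_half)
qed
lemma trig32: "cos (3*pi/2) = 0" "sin (3*pi/2) = -1"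
proof -
  have e: "3*pi/2 = pi/2 + pi" by simp
  show "cos (3*pi/2) = 0" "sin (3*pi/2) = -1" unfolding e by (simp_all only: cos_periodic_pi sin_periodic_pi cos_pi_half sin_pi_half)
qed

lemma pst_pi: "pst 3 JJ pi"
  unfolding pst_def
proof (intro conjI exI)
  show "0 < pi" by simp
  have u: "unit_vec (Suc 3) = unit_vec 4" by simp
  have ph: "exp (\<i> * complex_of_real (- pi/2)) = - \<i>"
    using cis_conv_exp[of "- pi/2", symmetric] by (simp add: complex_eq_iff)
  show "mat_exp ((- \<i> * complex_of_real pi) \<cdot>\<^sub>m JJ) *\<^sub>v unit_vec (Suc 3) 0 =
    exp (\<i> * complex_of_real (- pi/2)) \<cdot>\<^sub>v unit_vec (Suc 3) 3"
    unfolding u AA_def[symmetric] vec_AA' ph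
    by (rule eq_vecI) (auto simp: less4 trig52 trig32 unit_vec_def)
qed

lemma aux: "\<bar>3/8*a - 5/8*b\<bar> = 1 \<Longrightarrow> \<bar>a\<bar> \<le> 1 \<Longrightarrow> \<bar>b\<bar> \<le> (1::real) \<Longrightarrow> \<bar>a\<bar> = 1 \<and> \<bar>b\<bar> = 1"
  by arith

lemma no_early: assumes "0 < T" "T < pi" shows "\<not> pst 3 JJ T"
proof
  assume "pst 3 JJ T"
  then obtain ph where eq: "mat_exp (AA T) *\<^sub>v unit_vec 4 0 = exp (\<i> * complex_of_real ph) \<cdot>\<^sub>v unit_vec 4 3"
    unfolding pst_def AA_def by (auto simp: numeral_eq_Suc)
  have "(mat_exp (AA T) *\<^sub>v unit_vec 4 0) $ 3 = (exp (\<i> * complex_of_real ph) \<cdot>\<^sub>v unit_vec 4 3) $ 3"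
    using eq by simp
  then have "- \<i> * complex_of_real (3/8 * sin (5/2*T) - 5/8 * sin (3/2*T)) = exp (\<i> * complex_of_real ph)"
    unfolding vec_AA' by simp
  then have "cmod (- \<i> * complex_of_real (3/8 * sin (5/2*T) - 5/8 * sin (3/2*T))) = 1"
    by (metis cis_conv_exp norm_cis)
  then have r: "\<bar>3/8 * sin (5/2*T) - 5/8 * sin (3/2*T)\<bar> = 1"
    by (simp only: norm_mult norm_minus_cancel norm_ii norm_of_real mult_1_left)
  have a1: "\<bar>sin (5/2*T)\<bar> \<le> 1" "\<bar>sin (3/2*T)\<bar> \<le> 1" by (simp_all add: abs_sin_le_one)
  have "\<bar>sin (5/2*T)\<bar> = 1 \<and> \<bar>sin (3/2*T)\<bar> = 1" using aux[OF r a1] .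
  then have "\<bar>sin (5/2*T)\<bar> = 1" "\<bar>sin (3/2*T)\<bar> = 1" by simp_all
  then have "(sin (5/2*T))\<^sup>2 = 1" "(sin (3/2*T))\<^sup>2 = 1" by (metis abs_power2 power2_abs one_power2)+
  then have "(cos (5/2*T))\<^sup>2 = 0" "(cos (3/2*T))\<^sup>2 = 0"
    using sin_cos_squared_add[of "5/2*T"] sin_cos_squared_add[of "3/2*T"] by linarith+
  then have "cos (5/2*T) = 0" "cos (3/2*T) = 0" by simp_all
  then obtain i j :: int where ij: "odd i" "5/2*T = of_int i * (pi/2)" "odd j" "3/2*T = of_int j * (pi/2)"
    unfolding cos_zero_iff_int by blast
  have Tj: "3 * T = of_int j * pi" using ij(4) by simp
  have Ti: "5 * T = of_int i * pi" using ij(2) by simp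
  have "0 < of_int j * pi" "of_int j * pi < 3 * pi" using Tj assms by linarith+
  then have "0 < j" "j < 3" by (simp_all add: zero_less_mult_iff)
  then have "j = 1" using ij(3) by presburger
  have "real_of_int (3 * i) * pi = 3 * (5 * T)" using Ti by simp
  also have "\<dots> = 5 * (3 * T)" by simp
  also have "\<dots> = of_int 5 * pi" using Tj \<open>j = 1\<close> by simp
  finally have "of_int (3 * i) * pi = of_int 5 * pi" .
  then have "3 * i = 5" using pi_gt_zero by (metis mult_cancel_right of_int_eq_iff pi_neq_zero)
  then show False by presburger
qed

lemma cos5: "3 * cos (5 * (x::real)) + 5 * cos (3 * x) = 8 * cos x ^ 3 * (6 * cos x ^ 2 - 5)"
proof -
  have c3: "cos (3*x) = 4 * cos x ^ 3 - 3 * cos x" by (rule cos_treble_cos)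
  have s3: "sin (3*x) = sin (2*x) * cos x + cos (2*x) * sin x"
    using sin_add[of "2*x" x] by (simp add: algebra_simps)
  have c5: "cos (5*x) = cos (3*x) * cos (2*x) - sin (3*x) * sin (2*x)"
    using cos_add[of "3*x" "2*x"] by (simp add: algebra_simps)
  have c2: "cos (2*x) = 2 * cos x ^ 2 - 1" by (simp add: cos_double_cos)
  have s2: "sin (2*x) = 2 * sin x * cos x" by (rule sin_double)
  have ss: "sin x ^ 2 = 1 - cos x ^ 2" by (simp add: sin_squared_eq)
  have "cos (5*x) = (4 * cos x ^ 3 - 3 * cos x) * (2 * cos x ^ 2 - 1)
     - (4 * sin x ^ 2 * cos x ^ 3 + (2 * cos x ^ 2 - 1) * 2 * sin x ^ 2 * cos x)"
    unfolding c5 s3 c3 c2 s2 by (simp add: power2_eq_square power3_eq_cube algebra_simps)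
  then have "cos (5*x) = (4 * cos x ^ 3 - 3 * cos x) * (2 * cos x ^ 2 - 1)
     - (4 * (1 - cos x ^ 2) * cos x ^ 3 + (2 * cos x ^ 2 - 1) * 2 * (1 - cos x ^ 2) * cos x)"
    unfolding ss .
  then show ?thesis unfolding c3 by (simp add: power2_eq_square power3_eq_cube algebra_simps)
qed


lemma dot0: "(mat_exp (AA t) *\<^sub>v unit_vec 4 0) \<bullet>c unit_vec 4 0 = complex_of_real (3/8 * cos (5/2*t) + 5/8 * cos (3/2*t))"
  unfolding vec_AA' by (simp add: scalar_prod_def atLeast0LessThan numeral_eq_Suc unit_vec_def)

lemma ese_t: "\<exists>t. ese 3 JJ t"
proof -
  define c where "c = sqrt (5/6::real)"
  define x where "x = arccos c"
  have c0: "0 < c" "c < 1" unfolding c_def by (simp_all add: real_sqrt_lt_1_iff)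
  have cx: "cos x = c" unfolding x_def using c0 by simp
  have x0: "0 < x"
  proof -
    have "0 \<le> x" unfolding x_def using c0 by (intro arccos_lbound) auto
    moreover have "x \<noteq> 0" using cx c0 by auto
    ultimately show ?thesis by simp
  qed
  have x1: "x < pi/2"
  proof -
    have "x \<le> pi/2" unfolding x_def using c0 by (intro arccos_le_pi2) auto
    moreover have "x \<noteq> pi/2"
    proof
      assume "x = pi/2" then have "cos x = 0" by (simp only: cos_pi_half)
      with cx c0 show False by simp
    qed
    ultimately show ?thesis by simp
  qed
  have cc: "cos x ^ 2 = 5/6" unfolding cx c_def by simp
  have z: "3 * cos (5 * x) + 5 * cos (3 * x) = 0" unfolding cos5 cc by simp
  have "ese 3 JJ (2 * x)"
    unfolding ese_def
  proof (intro exI conjI)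
    show "earliest_pst 3 JJ pi" unfolding earliest_pst_def using pst_pi no_early by blast
    show "0 < 2 * x" "2 * x < pi" using x0 x1 by simp_all
    have u: "unit_vec (Suc 3) = unit_vec 4" by simp
    have "3/8 * cos (5/2*(2*x)) + 5/8 * cos (3/2*(2*x)) = (3 * cos (5 * x) + 5 * cos (3 * x)) / 8" by simp
    then have "3/8 * cos (5/2*(2*x)) + 5/8 * cos (3/2*(2*x)) = 0" using z by simp
    then show "(mat_exp ((- \<i> * complex_of_real (2 * x)) \<cdot>\<^sub>m JJ) *\<^sub>v unit_vec (Suc 3) 0) \<bullet>c unit_vec (Suc 3) 0 = 0"
      unfolding u AA_def[symmetric] dot0 by simp
  qed
  then show ?thesis ..
qed

theorem mainTheorem2:
  shows "\<exists>(a::nat \<Rightarrow> real) (b::nat \<Rightarrow> real).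
           (\<forall>i<3. b i > 0) \<and>
           (\<exists>T. pst 3 (jacobi_mat 3 a b) T) \<and>
           (\<exists>t. ese 3 (jacobi_mat 3 a b) t)"
proof -
  have "\<forall>i<3. sB i > 0" by (simp add: sB_def)
  moreover have "\<exists>T. pst 3 (jacobi_mat 3 sA sB) T" using pst_pi unfolding JJ_def by blast
  moreover have "\<exists>t. ese 3 (jacobi_mat 3 sA sB) t" using ese_t unfolding JJ_def by blast
  ultimately show ?thesis by blast
qed

end
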